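(* Let $K\in\{3,4\}$. For generic $U,H,W\in\mathbb{C}^{K\times K}$ (that is, for all triples outside the zero set of some nonzero polynomial in their entries), there exist diagonal matrices $D_1,D_2,D_3\in\mathbb{C}^{K\times K}$ and scalars $\lambda_1,\dots,\lambda_K\in\mathbb{C}$ such that, with $B:=HD_1+HD_2U+WD_3H$, for every $i\in\{1,\dots,K\}$ we have $B_{ij}=\lambda_i H_{ij}$ for all $j\neq i$, and $B_{ii}\neq \lambda_i H_{ii}$.
   Context: Setting: a $K$-user interference channel with full-duplex (in-band) interaction: $H$ is the channel matrix from sources to destinations, $U$ the channel matrix among sources, $W$ the channel matrix among destinations. In a two-phase scheme, in phase 1 sources send $x$, sources receive $Ux$ and destinations receive $Hx$; in phase 2 sources send $D_1x+D_2(Ux)$ and destinations send $D_3(Hx)$, so destinations receive $Bx$ (noise ignored). The diagonal coding matrices reflect that each node codes only over its own signals. The conditions mean interference at each destination is aligned between the two phases while the desired signal survives cancellation. *)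

theory Defs
  imports "HOL-Analysis.Analysis"
begin

type_synonym ('n) cmat = "complex ^ 'n ^ 'n"

inductive poly_in_entries :: "(('n::finite) cmat \<times> 'n cmat \<times> 'n cmat \<Rightarrow> complex) \<Rightarrow> bool" where
  const: "poly_in_entries (\<lambda>_. c)"
| varU: "poly_in_entries (\<lambda>(U, H, W). U $ i $ j)"
| varH: "poly_in_entries (\<lambda>(U, H, W). H $ i $ j)"
| varW: "poly_in_entries (\<lambda>(U, H, W). W $ i $ j)"
| add: "poly_in_entries p \<Longrightarrow> poly_in_entries q \<Longrightarrow> poly_in_entries (\<lambda>t. p t + q t)"
| mult: "poly_in_entries p \<Longrightarrow> poly_in_entries q \<Longrightarrow> poly_in_entries (\<lambda>t. p t * q t)"

text \<open>A property holds generically if it holds outside the zero set of some nonzero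
  polynomial in the entries (over the infinite field C, nonzero as a polynomial is
  the same as nonzero as a function).\<close>
definition generic :: "(('n::finite) cmat \<Rightarrow> 'n cmat \<Rightarrow> 'n cmat \<Rightarrow> bool) \<Rightarrow> bool" where
  "generic P \<longleftrightarrow> (\<exists>p. poly_in_entries p \<and> (\<exists>t. p t \<noteq> 0) \<and>
      (\<forall>U H W. p (U, H, W) \<noteq> 0 \<longrightarrow> P U H W))"

definition diagonal_mat :: "('n::finite) cmat \<Rightarrow> bool" where
  "diagonal_mat D \<longleftrightarrow> (\<forall>i j. i \<noteq> j \<longrightarrow> D $ i $ j = 0)"

end

theory Submission
  imports Defs
begin


lemma poly_const: "poly_in_entries (\<lambda>_. c)" by (rule poly_in_entries.const)
lemma poly_U: "poly_in_entries (\<lambda>t. fst t $ i $ j)"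
proof -
  have "(\<lambda>t::'a cmat \<times> 'a cmat \<times> 'a cmat. fst t $ i $ j) = (\<lambda>(U, H, W). U $ i $ j)" by auto
  thus ?thesis using poly_in_entries.varU by metis
qed
lemma poly_H: "poly_in_entries (\<lambda>t. fst (snd t) $ i $ j)"
proof -
  have "(\<lambda>t::'a cmat \<times> 'a cmat \<times> 'a cmat. fst (snd t) $ i $ j) = (\<lambda>(U, H, W). H $ i $ j)" by auto
  thus ?thesis using poly_in_entries.varH by metis
qed
lemma poly_W: "poly_in_entries (\<lambda>t. snd (snd t) $ i $ j)"
proof -
  have "(\<lambda>t::'a cmat \<times> 'a cmat \<times> 'a cmat. snd (snd t) $ i $ j) = (\<lambda>(U, H, W). W $ i $ j)" by auto
  thus ?thesis using poly_in_entries.varW by metis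
qed
lemmas poly_add = poly_in_entries.add
lemmas poly_mult = poly_in_entries.mult

lemma poly_sum: "finite S \<Longrightarrow> (\<And>s. s \<in> S \<Longrightarrow> poly_in_entries (f s)) \<Longrightarrow> poly_in_entries (\<lambda>t. \<Sum>s\<in>S. f s t)"
proof (induction S rule: finite_induct)
  case empty then show ?case by (simp add: poly_const)
next
  case (insert x F) then show ?case by (simp add: poly_add)
qed

lemma poly_prod: "finite S \<Longrightarrow> (\<And>s. s \<in> S \<Longrightarrow> poly_in_entries (f s)) \<Longrightarrow> poly_in_entries (\<lambda>t. \<Prod>s\<in>S. f s t)"
proof (induction S rule: finite_induct)
  case empty then show ?case by (simp add: poly_const)
next
  case (insert x F) then show ?case by (simp add: poly_mult)
qed

lemma poly_det:
  fixes M :: "('n::finite) cmat \<times> 'n cmat \<times> 'n cmat \<Rightarrow> complex^'m^'m"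
  assumes "\<And>i j. poly_in_entries (\<lambda>t. M t $ i $ j)"
  shows "poly_in_entries (\<lambda>t. det (M t))"
  unfolding det_def
  by (intro poly_sum poly_prod poly_mult poly_const assms finite_permutations finite) 

datatype role = RD1 | RD2 | RD3 | RL | RZ

definition coef :: "('n::finite \<Rightarrow> role) \<Rightarrow> 'n cmat \<Rightarrow> 'n cmat \<Rightarrow> 'n cmat \<Rightarrow> 'n \<Rightarrow> 'n \<Rightarrow> 'n \<times> 'n \<Rightarrow> complex" where
 "coef \<rho> U H W i j kc = (case \<rho> (snd kc) of
     RD1 \<Rightarrow> if fst kc = j then H$i$j else 0
   | RD2 \<Rightarrow> H$i$(fst kc) * U$(fst kc)$j
   | RD3 \<Rightarrow> W$i$(fst kc) * H$(fst kc)$j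
   | RL \<Rightarrow> if fst kc = i then - H$i$j else 0
   | RZ \<Rightarrow> 0)"

definition Amat :: "('n::finite \<Rightarrow> role) \<Rightarrow> ('n \<Rightarrow> complex^('n\<times>'n)) \<Rightarrow> 'n cmat \<Rightarrow> 'n cmat \<Rightarrow> 'n cmat \<Rightarrow> complex^('n\<times>'n)^('n\<times>'n)" where
 "Amat \<rho> R U H W = (\<chi> r. if fst r = snd r then R (fst r) else (\<chi> kc. coef \<rho> U H W (fst r) (snd r) kc))"

definition evec :: "'n::finite \<Rightarrow> complex^('n\<times>'n)" where "evec r0 = axis (r0,r0) 1"

definition xvec where
 "xvec \<rho> R r0 U H W = (\<chi> k. det(\<chi> i j. if j=k then (evec r0)$i else (Amat \<rho> R U H W)$i$j))"

definition fval where "fval \<rho> U H W (x::complex^('n::finite\<times>'n)) i = (\<Sum>kc\<in>UNIV. coef \<rho> U H W i i kc * x$kc)"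

definition pol where
 "pol \<rho> R r0 = (\<lambda>t. det (Amat \<rho> R (fst t) (fst (snd t)) (snd (snd t))) * (\<Prod>i\<in>UNIV. fval \<rho> (fst t) (fst (snd t)) (snd (snd t)) (xvec \<rho> R r0 (fst t) (fst (snd t)) (snd (snd t))) i))"

lemma poly_if: "poly_in_entries f \<Longrightarrow> poly_in_entries (\<lambda>t. if c then k else f t)"
  by (cases c) (simp_all add: poly_const)

lemma poly_coef: "poly_in_entries (\<lambda>t. coef \<rho> (fst t) (fst (snd t)) (snd (snd t)) i j kc)"
  unfolding coef_def
  by (cases "\<rho> (snd kc)"; cases "fst kc = j"; cases "fst kc = i")
     (auto intro: poly_mult poly_U poly_H poly_W poly_const
        simp: poly_mult[OF poly_const poly_H, of "-1", simplified])

lemma poly_Amat: "poly_in_entries (\<lambda>t. Amat \<rho> R (fst t) (fst (snd t)) (snd (snd t)) $ r $ s)"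
  unfolding Amat_def by (cases "fst r = snd r") (auto intro: poly_coef poly_const)

lemma poly_pol: "poly_in_entries (pol \<rho> R r0)"
proof -
  have e: "pol \<rho> R r0 = (\<lambda>t. det (Amat \<rho> R (fst t) (fst (snd t)) (snd (snd t))) *
     (\<Prod>i\<in>UNIV. \<Sum>kc\<in>UNIV. coef \<rho> (fst t) (fst (snd t)) (snd (snd t)) i i kc *
        det(\<chi> a b. if b=kc then (evec r0)$a else (Amat \<rho> R (fst t) (fst (snd t)) (snd (snd t)))$a$b)))"
    by (simp add: pol_def fval_def xvec_def)
  show ?thesis unfolding e
    apply (intro poly_mult poly_det poly_prod poly_sum poly_coef poly_Amat finite)
    apply (simp only: vec_lambda_beta)
    apply (rule poly_if, rule poly_Amat)
    done
qed

definition sr where "sr \<rho> r (x::complex^('n::finite\<times>'n)) k = (\<Sum>c\<in>UNIV. if \<rho> c = r then x$(k,c) else 0)"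
definition dg where "dg \<rho> r x = (\<chi> a b. if a = b then sr \<rho> r x a else 0)"

lemma diag_dg: "diagonal_mat (dg \<rho> r x)"
  by (simp add: diagonal_mat_def dg_def)

lemma mult_dg: "((H::'n::finite cmat) ** dg \<rho> r x)$i$j = H$i$j * sr \<rho> r x j"
  by (simp add: matrix_matrix_mult_def dg_def if_distrib[of "\<lambda>z. _ * z"] cong: if_cong)

lemma mult_dg2: "((H::'n::finite cmat) ** dg \<rho> r x ** U)$i$j = (\<Sum>k\<in>UNIV. H$i$k * sr \<rho> r x k * U$k$j)"
  by (simp add: matrix_matrix_mult_def[of "H ** dg \<rho> r x" U] mult_dg)

lemma coef_split: "coef \<rho> U H W i j (k,c) * y =
   (if \<rho> c = RD1 then (if k = j then H$i$j * y else 0) else 0)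
 + (if \<rho> c = RD2 then H$i$k * U$k$j * y else 0)
 + (if \<rho> c = RD3 then W$i$k * H$k$j * y else 0)
 - (if \<rho> c = RL then (if k = i then H$i$j * y else 0) else 0)"
  by (cases "\<rho> c") (auto simp: coef_def)

lemma sum_pairs: "(\<Sum>kc\<in>(UNIV::('n::finite\<times>'n) set). f kc) = (\<Sum>k\<in>UNIV. \<Sum>c\<in>UNIV. f (k,c))"
  by (simp add: sum.cartesian_product UNIV_Times_UNIV[symmetric] del: UNIV_Times_UNIV)

lemma t1: "(\<Sum>k\<in>UNIV. \<Sum>c\<in>UNIV. (if \<rho> c = r then (if k = j then a * x$(k,c) else 0) else 0)) = a * sr \<rho> r x j"
proof -
  have "(\<Sum>k\<in>UNIV. \<Sum>c\<in>UNIV. (if \<rho> c = r then (if k = j then a * x$(k,c) else 0) else 0))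
     = (\<Sum>k\<in>UNIV. if k = j then (\<Sum>c\<in>UNIV. (if \<rho> c = r then a * x$(k,c) else 0)) else 0)"
    by (rule sum.cong) (simp_all cong: if_cong)
  also have "\<dots> = (\<Sum>c\<in>UNIV. (if \<rho> c = r then a * x$(j,c) else 0))" by simp
  also have "\<dots> = a * sr \<rho> r x j" unfolding sr_def sum_distrib_left by (rule sum.cong) auto
  finally show ?thesis .
qed

lemma t2: "(\<Sum>k\<in>UNIV. \<Sum>c\<in>UNIV. (if \<rho> c = r then a k * x$(k,c) else 0)) = (\<Sum>k\<in>UNIV. a k * sr \<rho> r x k)"
  unfolding sr_def sum_distrib_left by (intro sum.cong) auto

lemma sumid:
  fixes U H W :: "'n::finite cmat"
  shows "(H ** dg \<rho> RD1 x + H ** dg \<rho> RD2 x ** U + W ** dg \<rho> RD3 x ** H)$i$j - sr \<rho> RL x i * H$i$j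
     = (\<Sum>kc\<in>UNIV. coef \<rho> U H W i j kc * x$kc)"
proof -
  have "(\<Sum>kc\<in>UNIV. coef \<rho> U H W i j kc * x$kc) = (\<Sum>k\<in>UNIV. \<Sum>c\<in>UNIV. coef \<rho> U H W i j (k,c) * x$(k,c))"
    by (rule sum_pairs)
  also have "\<dots> = (\<Sum>k\<in>UNIV. \<Sum>c\<in>UNIV. 
      (if \<rho> c = RD1 then (if k = j then H$i$j * x$(k,c) else 0) else 0)
    + (if \<rho> c = RD2 then H$i$k * U$k$j * x$(k,c) else 0)
    + (if \<rho> c = RD3 then W$i$k * H$k$j * x$(k,c) else 0)
    - (if \<rho> c = RL then (if k = i then H$i$j * x$(k,c) else 0) else 0))"
    by (simp only: coef_split)
  also have "\<dots> = H$i$j * sr \<rho> RD1 x j + (\<Sum>k\<in>UNIV. H$i$k * sr \<rho> RD2 x k * U$k$j)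
      + (\<Sum>k\<in>UNIV. W$i$k * sr \<rho> RD3 x k * H$k$j) - sr \<rho> RL x i * H$i$j"
    by (simp only: sum.distrib sum_subtractf t1 t2[of \<rho> RD2 "\<lambda>k. H$i$k * U$k$j"] t2[of \<rho> RD3 "\<lambda>k. W$i$k * H$k$j"] t1[of \<rho> RL i "H$i$j"]; simp add: mult_ac)
  finally show ?thesis by (simp add: mult_dg mult_dg2)
qed

definition Pp :: "'n::finite cmat \<Rightarrow> 'n cmat \<Rightarrow> 'n cmat \<Rightarrow> bool" where
 "Pp U H W \<longleftrightarrow> (\<exists>D1 D2 D3 (lam :: 'n \<Rightarrow> complex).
             diagonal_mat D1 \<and> diagonal_mat D2 \<and> diagonal_mat D3 \<and>
             (let B = H ** D1 + H ** D2 ** U + W ** D3 ** H in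
               \<forall>i. (\<forall>j. j \<noteq> i \<longrightarrow> B $ i $ j = lam i * H $ i $ j) \<and>
                   B $ i $ i \<noteq> lam i * H $ i $ i))"

lemma Pp_from:
  assumes "\<And>i j. j \<noteq> i \<Longrightarrow> (\<Sum>kc\<in>UNIV. coef \<rho> U H W i j kc * y$kc) = 0"
    and "\<And>i. (\<Sum>kc\<in>UNIV. coef \<rho> U H W i i kc * y$kc) \<noteq> 0"
  shows "Pp U H W"
  unfolding Pp_def Let_def
proof (intro exI conjI allI impI)
  show "diagonal_mat (dg \<rho> RD1 y)" "diagonal_mat (dg \<rho> RD2 y)" "diagonal_mat (dg \<rho> RD3 y)"
    by (rule diag_dg)+
  fix i
  show "(H ** dg \<rho> RD1 y + H ** dg \<rho> RD2 y ** U + W ** dg \<rho> RD3 y ** H) $ i $ i \<noteq> sr \<rho> RL y i * H $ i $ i"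
    using sumid[of H \<rho> y U W i i] assms(2)[of i] by auto
  fix j assume "j \<noteq> i"
  show "(H ** dg \<rho> RD1 y + H ** dg \<rho> RD2 y ** U + W ** dg \<rho> RD3 y ** H) $ i $ j = sr \<rho> RL y i * H $ i $ j"
    using sumid[of H \<rho> y U W i j] assms(1)[OF \<open>j \<noteq> i\<close>] by auto
qed

lemma main_gen:
  assumes "pol \<rho> R r0 (U,H,W) \<noteq> 0"
  shows "Pp U H W"
proof -
  let ?A = "Amat \<rho> R U H W"
  let ?x = "xvec \<rho> R r0 U H W"
  have d: "det ?A \<noteq> 0" using assms by (simp add: pol_def)
  have f: "fval \<rho> U H W ?x i \<noteq> 0" for i using assms by (simp add: pol_def)
  define y where "y = (\<chi> k. ?x$k / det ?A)"
  have "?A *v y = evec r0"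
    using cramer[OF d, of y "evec r0"] by (simp add: y_def xvec_def)
  hence Ay: "(?A *v y)$r = evec r0 $ r" for r by simp
  show ?thesis
  proof (rule Pp_from[of \<rho> U H W y])
    fix i j :: 'a assume "j \<noteq> i"
    have "evec r0 $ (i,j) = 0" using \<open>j \<noteq> i\<close> by (auto simp: evec_def axis_def)
    then show "(\<Sum>kc\<in>UNIV. coef \<rho> U H W i j kc * y$kc) = 0"
      using Ay[of "(i,j)"] \<open>j \<noteq> i\<close> by (simp add: matrix_vector_mult_def Amat_def)
  next
    fix i
    have "(\<Sum>kc\<in>UNIV. coef \<rho> U H W i i kc * y$kc) = fval \<rho> U H W ?x i / det ?A"
      by (simp add: fval_def y_def sum_divide_distrib)
    then show "(\<Sum>kc\<in>UNIV. coef \<rho> U H W i i kc * y$kc) \<noteq> 0" using f d by simp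
  qed
qed

lemma generic_from_pol:
  fixes \<rho> :: "'n::finite \<Rightarrow> role"
  assumes "pol \<rho> R r0 t0 \<noteq> 0"
  shows "generic (Pp :: 'n cmat \<Rightarrow> 'n cmat \<Rightarrow> 'n cmat \<Rightarrow> bool)"
  unfolding generic_def
  using poly_pol[of \<rho> R r0] assms main_gen[of \<rho> R r0] by blast

definition rI :: "('m::finite \<Rightarrow> 'n::finite) \<Rightarrow> 'n cmat \<Rightarrow> 'm cmat" where
  "rI g M = (\<chi> a b. M $ g a $ g b)"

lemma rI_mult: assumes "bij g" shows "rI g (X ** Y) = rI g X ** rI g Y"
proof -
  have "(\<Sum>k\<in>UNIV. X $ g a $ k * Y $ k $ g b) = (\<Sum>c\<in>UNIV. X $ g a $ g c * Y $ g c $ g b)" for a b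
    using sum.reindex[of g UNIV "\<lambda>k. X $ g a $ k * Y $ k $ g b"] assms
    by (simp add: bij_is_inj bij_is_surj)
  thus ?thesis by (simp add: rI_def matrix_matrix_mult_def vec_eq_iff)
qed

lemma rI_add: "rI g (X + Y) = rI g X + rI g Y"
  by (simp add: rI_def vec_eq_iff)

lemma rI_inv: assumes "bij g" shows "rI g (rI (inv g) M) = M"
  using assms by (simp add: rI_def vec_eq_iff bij_is_inj)

lemma poly_rI:
  assumes "poly_in_entries p" and "bij (g :: 'm::finite \<Rightarrow> 'n::finite)"
  shows "poly_in_entries (\<lambda>t. p (rI g (fst t), rI g (fst (snd t)), rI g (snd (snd t))))"
  using assms(1)
proof induction
  case (const c) then show ?case by (simp add: poly_const)
next
  case (varU i j) then show ?case using poly_U[of "g i" "g j"] by (simp add: rI_def)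
next
  case (varH i j) then show ?case using poly_H[of "g i" "g j"] by (simp add: rI_def)
next
  case (varW i j) then show ?case using poly_W[of "g i" "g j"] by (simp add: rI_def)
next
  case (add p q) then show ?case by (simp add: poly_add)
next
  case (mult p q) then show ?case by (simp add: poly_mult)
qed

lemma Pp_rI:
  assumes "bij (g :: 'm::finite \<Rightarrow> 'n::finite)" and "Pp (rI g U) (rI g H) (rI g W)"
  shows "Pp U H W"
proof -
  from assms(2) obtain D1 D2 D3 lam where dd: "diagonal_mat D1" "diagonal_mat D2" "diagonal_mat D3"
    and P: "\<And>i. (\<forall>j. j \<noteq> i \<longrightarrow> (rI g H ** D1 + rI g H ** D2 ** rI g U + rI g W ** D3 ** rI g H) $ i $ j = lam i * rI g H $ i $ j) \<and>
                   (rI g H ** D1 + rI g H ** D2 ** rI g U + rI g W ** D3 ** rI g H) $ i $ i \<noteq> lam i * rI g H $ i $ i"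
    unfolding Pp_def Let_def by blast
  let ?h = "inv g"
  have bh: "bij ?h" using assms(1) by (simp add: bij_imp_bij_inv)
  let ?E1 = "rI ?h D1" and ?E2 = "rI ?h D2" and ?E3 = "rI ?h D3"
  let ?B = "H ** ?E1 + H ** ?E2 ** U + W ** ?E3 ** H"
  have RB: "rI g ?B = rI g H ** D1 + rI g H ** D2 ** rI g U + rI g W ** D3 ** rI g H"
    using assms(1) by (simp add: rI_add rI_mult rI_inv)
  have Ent: "X $ i $ j = (rI g X) $ ?h i $ ?h j" for X i j
    using assms(1) by (simp add: rI_def surj_f_inv_f bij_is_surj)
  note Bent = Ent[of ?B] and Hent = Ent[of H]
  have injh: "?h i = ?h j \<longleftrightarrow> i = j" for i j using bh by (metis bij_is_inj inj_eq)
  have diag: "diagonal_mat (rI ?h D)" if "diagonal_mat D" for D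
    using that injh by (simp add: diagonal_mat_def rI_def)
  show ?thesis unfolding Pp_def Let_def
  proof (rule exI[of _ ?E1], rule exI[of _ ?E2], rule exI[of _ ?E3], rule exI[of _ "\<lambda>i. lam (?h i)"], intro conjI allI impI)
    show "diagonal_mat ?E1" using dd diag by auto
    show "diagonal_mat ?E2" using dd diag by auto
    show "diagonal_mat ?E3" using dd diag by auto
    fix i
    have e1: "?B $ i $ j = (rI g H ** D1 + rI g H ** D2 ** rI g U + rI g W ** D3 ** rI g H) $ ?h i $ ?h j" for j
      using Ent[of ?B i j] RB by simp
    have e2: "H $ i $ j = rI g H $ ?h i $ ?h j" for j by (rule Ent)
    show "?B $ i $ i \<noteq> lam (?h i) * H $ i $ i"
      using P[of "?h i"] e1[of i] e2[of i] by simp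
    fix j assume "j \<noteq> i"
    hence "?h j \<noteq> ?h i" using injh by simp
    then show "?B $ i $ j = lam (?h i) * H $ i $ j"
      using P[of "?h i"] e1[of j] e2[of j] by simp
  qed
qed

lemma generic_transfer:
  assumes "bij (g :: 'm::finite \<Rightarrow> 'n::finite)" and "generic (Pp :: 'm cmat \<Rightarrow> 'm cmat \<Rightarrow> 'm cmat \<Rightarrow> bool)"
  shows "generic (Pp :: 'n cmat \<Rightarrow> 'n cmat \<Rightarrow> 'n cmat \<Rightarrow> bool)"
proof -
  from assms(2)[unfolded generic_def] obtain p where p1: "poly_in_entries p" and p2: "\<exists>t. p t \<noteq> 0"
     and p3: "\<forall>U H W. p (U,H,W) \<noteq> 0 \<longrightarrow> Pp (U::'m cmat) H W" by blast
  from p2 obtain t0 where "p t0 \<noteq> 0" by blast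
  note p = p1 this p3[rule_format]
  let ?q = "\<lambda>t. p (rI g (fst t), rI g (fst (snd t)), rI g (snd (snd t)))"
  let ?h = "inv g"
  obtain U0 H0 W0 where t0: "t0 = (U0,H0,W0)" by (cases t0) auto
  have "?q (rI ?h U0, rI ?h H0, rI ?h W0) \<noteq> 0" using p(2) t0 assms(1) by (simp add: rI_inv)
  moreover have "Pp U H W" if "?q (U,H,W) \<noteq> 0" for U H W
    using p(3) that Pp_rI[OF assms(1)] by simp
  ultimately show ?thesis unfolding generic_def using poly_rI[OF p(1) assms(1)] by blast
qed



lemma witness_lemma:
  fixes \<rho> :: "'n::finite \<Rightarrow> role"
  assumes B: "B ** Amat \<rho> R U H W = mat 1" and y: "Amat \<rho> R U H W *v y = evec r0"
    and f: "\<And>i. fval \<rho> U H W y i \<noteq> 0"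
  shows "pol \<rho> R r0 (U,H,W) \<noteq> 0"
proof -
  let ?A = "Amat \<rho> R U H W"
  have "det B * det ?A = 1" using B det_mul[of B ?A] by simp
  hence d: "det ?A \<noteq> 0" by auto
  have x: "xvec \<rho> R r0 U H W $ k = y$k * det ?A" for k
    unfolding xvec_def y[symmetric] by (simp add: cramer_lemma)
  have fx: "fval \<rho> U H W (xvec \<rho> R r0 U H W) i = det ?A * fval \<rho> U H W y i" for i
    by (simp add: fval_def x sum_distrib_left mult_ac)
  show ?thesis using d f by (simp add: pol_def fx)
qed

datatype t3 = C0 | C1 | C2

lemma UNIV_t3: "(UNIV::t3 set) = {C0, C1, C2}" using t3.exhaust by auto

instance t3 :: finite by standard (simp add: UNIV_t3)

lemma sum_t3: "sum f (UNIV::t3 set) = f C0 + f C1 + f C2" by (simp add: UNIV_t3 ac_simps)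

lemma prod_t3: "prod f (UNIV::t3 set) = f C0 * f C1 * f C2" by (simp add: UNIV_t3 ac_simps)

lemma all_t3: "(\<forall>x::t3. P x) \<longleftrightarrow> P C0 \<and> P C1 \<and> P C2" by (metis t3.exhaust)

fun ix_t3 :: "t3 \<Rightarrow> nat" where "ix_t3 C0 = 0" | "ix_t3 C1 = 1" | "ix_t3 C2 = 2"

fun px_t3 :: "t3 \<times> t3 \<Rightarrow> nat" where "px_t3 (a,b) = 3 * ix_t3 a + ix_t3 b"

fun rho_t3 :: "t3 \<Rightarrow> role" where "rho_t3 C0 = RD1" | "rho_t3 C1 = RD2" | "rho_t3 C2 = RL"

definition "U_t3 = ((\<chi> i j. (of_int ([[0, 1, 1], [0, 0, 1], [1, 0, 0]] ! ix_t3 i ! ix_t3 j) :: complex)) :: t3 cmat)"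

definition "H_t3 = ((\<chi> i j. (of_int ([[1, 1, 0], [1, 1, 1], [0, 1, 1]] ! ix_t3 i ! ix_t3 j) :: complex)) :: t3 cmat)"

definition "W_t3 = ((\<chi> i j. (of_int ([[0, 1, 0], [0, 1, 0], [1, 1, 0]] ! ix_t3 i ! ix_t3 j) :: complex)) :: t3 cmat)"

definition "A_t3 = ((\<chi> r s. (of_int ([[0, 0, 0, 0, 1, 0, 0, 0, 0], [0, 1, (-1), 1, 0, 0, 0, 0, 0], [0, 1, 0, 0, 1, 0, 0, 0, 0], [1, 0, 0, 0, 0, (-1), 0, 1, 0], [1, 0, 0, 0, 0, 0, 0, 0, 0], [0, 1, 0, 0, 1, (-1), 1, 0, 0], [0, 0, 0, 0, 0, 0, 0, 1, 0], [0, 0, 0, 1, 0, 0, 0, 0, (-1)], [0, 0, 0, 1, 0, 0, 0, 0, 0]] ! px_t3 r ! px_t3 s) :: complex)) :: complex^(t3\<times>t3)^(t3\<times>t3))"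

definition "B_t3 = ((\<chi> r s. (of_int ([[0, 0, 0, 0, 1, 0, 0, 0, 0], [(-1), 0, 1, 0, 0, 0, 0, 0, 0], [(-1), (-1), 1, 0, 0, 0, 0, 0, 1], [0, 0, 0, 0, 0, 0, 0, 0, 1], [1, 0, 0, 0, 0, 0, 0, 0, 0], [0, 0, 0, (-1), 1, 0, 1, 0, 0], [0, 0, (-1), (-1), 1, 1, 1, 0, 0], [0, 0, 0, 0, 0, 0, 1, 0, 0], [0, 0, 0, 0, 0, 0, 0, (-1), 1]] ! px_t3 r ! px_t3 s) :: complex)) :: complex^(t3\<times>t3)^(t3\<times>t3))"

definition "y_t3 = ((\<chi> r. (of_int ([1, 0, 0, 0, 0, 1, 1, 0, 0] ! px_t3 r) :: complex)) :: complex^(t3\<times>t3))"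

fun ex_t3 :: "t3 \<Rightarrow> t3 \<times> t3" where "ex_t3 C0 = (C1, C1)" | "ex_t3 C1 = (C0, C0)" | "ex_t3 C2 = (C1, C0)"

definition "R_t3 i = (axis (ex_t3 i) 1 :: complex^(t3\<times>t3))"

definition "r0_t3 = C1"


lemma A_t3_eq: "Amat rho_t3 R_t3 U_t3 H_t3 W_t3 = A_t3"
  by (simp add: vec_eq_iff all_t3 Amat_def coef_def U_t3_def H_t3_def W_t3_def A_t3_def R_t3_def axis_def)

lemma BA_t3: "B_t3 ** A_t3 = mat 1"
  by (simp add: vec_eq_iff all_t3 matrix_matrix_mult_def sum_pairs sum_t3 B_t3_def A_t3_def mat_def)

lemma Ay_t3: "A_t3 *v y_t3 = evec r0_t3"
  by (simp add: vec_eq_iff all_t3 matrix_vector_mult_def sum_pairs sum_t3 y_t3_def A_t3_def evec_def axis_def r0_t3_def)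

lemma f_t3: "fval rho_t3 U_t3 H_t3 W_t3 y_t3 i \<noteq> 0"
  by (cases i) (simp_all add: fval_def sum_pairs sum_t3 coef_def U_t3_def H_t3_def W_t3_def y_t3_def)

lemma generic_t3: "generic (Pp :: t3 cmat \<Rightarrow> t3 cmat \<Rightarrow> t3 cmat \<Rightarrow> bool)"
  using witness_lemma[of B_t3 rho_t3 R_t3 U_t3 H_t3 W_t3 y_t3 r0_t3] BA_t3 Ay_t3 f_t3 A_t3_eq
  by (intro generic_from_pol) auto


datatype t4 = E0 | E1 | E2 | E3

lemma UNIV_t4: "(UNIV::t4 set) = {E0, E1, E2, E3}" using t4.exhaust by auto

instance t4 :: finite by standard (simp add: UNIV_t4)

lemma sum_t4: "sum f (UNIV::t4 set) = f E0 + f E1 + f E2 + f E3" by (simp add: UNIV_t4 ac_simps)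

lemma prod_t4: "prod f (UNIV::t4 set) = f E0 * f E1 * f E2 * f E3" by (simp add: UNIV_t4 ac_simps)

lemma all_t4: "(\<forall>x::t4. P x) \<longleftrightarrow> P E0 \<and> P E1 \<and> P E2 \<and> P E3" by (metis t4.exhaust)

fun ix_t4 :: "t4 \<Rightarrow> nat" where "ix_t4 E0 = 0" | "ix_t4 E1 = 1" | "ix_t4 E2 = 2" | "ix_t4 E3 = 3"

fun px_t4 :: "t4 \<times> t4 \<Rightarrow> nat" where "px_t4 (a,b) = 4 * ix_t4 a + ix_t4 b"

fun rho_t4 :: "t4 \<Rightarrow> role" where "rho_t4 E0 = RD1" | "rho_t4 E1 = RD2" | "rho_t4 E2 = RD3" | "rho_t4 E3 = RL"

definition "U_t4 = ((\<chi> i j. (of_int ([[1, 0, 1, 0], [0, 0, 0, 1], [0, 0, 1, 0], [1, 0, 1, 1]] ! ix_t4 i ! ix_t4 j) :: complex)) :: t4 cmat)"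

definition "H_t4 = ((\<chi> i j. (of_int ([[1, 0, 1, 1], [1, 1, 1, 1], [1, 1, 1, 0], [0, 1, 1, 1]] ! ix_t4 i ! ix_t4 j) :: complex)) :: t4 cmat)"

definition "W_t4 = ((\<chi> i j. (of_int ([[0, 0, 1, 1], [0, 0, 1, 0], [1, 1, 1, 1], [1, 1, 1, 0]] ! ix_t4 i ! ix_t4 j) :: complex)) :: t4 cmat)"

definition "A_t4 = ((\<chi> r s. (of_int ([[0, 0, 0, 0, 0, 0, 0, 0, 0, 0, 0, 0, 0, 0, 0, 1], [0, 0, 0, 0, 0, 0, 0, 0, 0, 0, 1, 0, 0, 0, 1, 0], [0, 1, 0, (-1), 0, 0, 0, 0, 1, 1, 1, 0, 0, 1, 1, 0], [0, 0, 0, (-1), 0, 0, 0, 0, 0, 0, 0, 0, 1, 1, 1, 0], [1, 1, 0, 0, 0, 0, 0, (-1), 0, 0, 1, 0, 0, 1, 0, 0], [0, 0, 0, 0, 0, 0, 0, 0, 1, 0, 0, 0, 0, 0, 0, 0], [0, 1, 0, 0, 0, 0, 0, (-1), 1, 1, 1, 0, 0, 1, 0, 0], [0, 0, 0, 0, 0, 1, 0, (-1), 0, 0, 0, 0, 1, 1, 0, 0], [1, 1, 1, 0, 0, 0, 1, 0, 0, 0, 1, (-1), 0, 0, 0, 0], [0, 0, 0, 0, 1, 0, 1, 0, 0, 0, 1, (-1), 0, 0, 1, 0], [0, 0, 0, 0, 1, 0, 0, 0, 0, 0, 0, 0, 0, 0, 0, 0], [0, 0, 1, 0, 0, 1, 1,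 0, 0, 0, 0, 0, 0, 0, 1, 0], [0, 0, 1, 0, 0, 0, 1, 0, 0, 0, 1, 0, 0, 1, 0, 0], [0, 0, 0, 0, 1, 0, 1, 0, 0, 0, 1, 0, 0, 0, 0, (-1)], [0, 0, 1, 0, 0, 0, 1, 0, 1, 1, 1, 0, 0, 1, 0, (-1)], [0, 0, 0, 0, 0, 0, 1, 0, 0, 0, 0, 0, 0, 0, 0, 0]] ! px_t4 r ! px_t4 s) :: complex)) :: complex^(t4\<times>t4)^(t4\<times>t4))"

definition "B_t4 = ((\<chi> r s. (of_int ([[1, 0, 0, 0, 1, 0, (-1), 0, 0, 0, 0, 0, (-1), 0, 1, 0], [(-3), 2, 1, (-1), (-1), 0, 0, 1, 1, (-1), 3, (-1), 1, (-2), (-1), 3], [1, (-1), (-1), 1, 0, 0, 1, (-1), 0, 0, (-1), 1, 0, 1, 0, (-2)], [(-4), 4, 1, (-2), (-1), 0, (-1), 2, 1, (-1), 5, (-2), 1, (-4), 0, 5], [0, 0, 0, 0, 0, 0, 0, 0, 0, 0, 1, 0, 0, 0, 0, 0], [0, 0, 1, (-1), 0, 0, (-1), 1, 0, 0, 0, 0, 0, 0, 0, 0], [0, 0, 0, 0, 0, 0, 0, 0, 0, 0, 0, 0, 0, 0, 0, 1], [(-3), 3, 2, (-2), (-1), 0, (-2), 2, 1, (-1), 4, (-2), 1, (-3), 0, 4], [0, 0, 0, 0, 0, 1, 0, 0, 0, 0, 0, 0, 0, 0, 0, 0], [1, 0, 0, 0, 0, (-1), 0, 0, 0, 0, 0,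 0, (-1), 0, 1, 0], [1, 0, 0, 0, 0, 0, 0, 0, 0, 0, (-1), 0, 0, 1, 0, (-1)], [0, 1, 0, 0, 0, 0, 0, 0, 0, (-1), 1, 0, 0, 0, 0, 1], [(-1), 2, 0, 0, (-1), 0, 0, 1, 1, (-1), 2, (-1), 0, (-1), 0, 2], [(-2), 1, 1, (-1), 0, 0, (-1), 1, 0, 0, 2, (-1), 1, (-2), 0, 2], [(-1), 1, 0, 0, 0, 0, 0, 0, 0, 0, 1, 0, 0, (-1), 0, 1], [1, 0, 0, 0, 0, 0, 0, 0, 0, 0, 0, 0, 0, 0, 0, 0]] ! px_t4 r ! px_t4 s) :: complex)) :: complex^(t4\<times>t4)^(t4\<times>t4))"

definition "y_t4 = ((\<chi> r. (of_int ([0, 3, (-1), 5, 1, 0, 0, 4, 0, 0, (-1), 1, 2, 2, 1, 0] ! px_t4 r) :: complex)) :: complex^(t4\<times>t4))"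

fun ex_t4 :: "t4 \<Rightarrow> t4 \<times> t4" where "ex_t4 E0 = (E3, E3)" | "ex_t4 E1 = (E2, E0)" | "ex_t4 E2 = (E1, E0)" | "ex_t4 E3 = (E1, E2)"

definition "R_t4 i = (axis (ex_t4 i) 1 :: complex^(t4\<times>t4))"

definition "r0_t4 = E2"

lemma A_t4_eq: "Amat rho_t4 R_t4 U_t4 H_t4 W_t4 = A_t4"
  by (simp add: vec_eq_iff all_t4 Amat_def coef_def U_t4_def H_t4_def W_t4_def A_t4_def R_t4_def axis_def)

lemma BA_t4: "B_t4 ** A_t4 = mat 1"
  by (simp add: vec_eq_iff all_t4 matrix_matrix_mult_def sum_pairs sum_t4 B_t4_def A_t4_def mat_def)

lemma Ay_t4: "A_t4 *v y_t4 = evec r0_t4"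
  by (simp add: vec_eq_iff all_t4 matrix_vector_mult_def sum_pairs sum_t4 y_t4_def A_t4_def evec_def axis_def r0_t4_def)

lemma f_t4: "fval rho_t4 U_t4 H_t4 W_t4 y_t4 i \<noteq> 0"
  by (cases i) (simp_all add: fval_def sum_pairs sum_t4 coef_def U_t4_def H_t4_def W_t4_def y_t4_def)

lemma generic_t4: "generic (Pp :: t4 cmat \<Rightarrow> t4 cmat \<Rightarrow> t4 cmat \<Rightarrow> bool)"
  using witness_lemma[of B_t4 rho_t4 R_t4 U_t4 H_t4 W_t4 y_t4 r0_t4] BA_t4 Ay_t4 f_t4 A_t4_eq
  by (intro generic_from_pol) auto


theorem theorem5:
  assumes "CARD('n::finite) = 3 \<or> CARD('n) = 4"
  shows "generic (\<lambda>(U::'n cmat) (H::'n cmat) (W::'n cmat).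
           \<exists>D1 D2 D3 (lam :: 'n \<Rightarrow> complex).
             diagonal_mat D1 \<and> diagonal_mat D2 \<and> diagonal_mat D3 \<and>
             (let B = H ** D1 + H ** D2 ** U + W ** D3 ** H in
               \<forall>i. (\<forall>j. j \<noteq> i \<longrightarrow> B $ i $ j = lam i * H $ i $ j) \<and>
                   B $ i $ i \<noteq> lam i * H $ i $ i))"
proof -
  have "generic (Pp :: 'n cmat \<Rightarrow> 'n cmat \<Rightarrow> 'n cmat \<Rightarrow> bool)"
  proof (cases "CARD('n) = 3")
    case True
    have "card (UNIV :: t3 set) = card (UNIV :: 'n set)" using True by (simp add: UNIV_t3)
    then obtain g :: "t3 \<Rightarrow> 'n" where "bij_betw g UNIV UNIV"
      using bij_betw_iff_card[of "UNIV :: t3 set" "UNIV :: 'n set"] by auto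
    then show ?thesis using generic_transfer[of g] generic_t3 by auto
  next
    case False
    then have "CARD('n) = 4" using assms by auto
    have "card (UNIV :: t4 set) = card (UNIV :: 'n set)" using \<open>CARD('n) = 4\<close> by (simp add: UNIV_t4)
    then obtain g :: "t4 \<Rightarrow> 'n" where "bij_betw g UNIV UNIV"
      using bij_betw_iff_card[of "UNIV :: t4 set" "UNIV :: 'n set"] by auto
    then show ?thesis using generic_transfer[of g] generic_t4 by auto
  qed
  then show ?thesis unfolding Pp_def[abs_def] .
qed

end
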